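(* Let $n\ge 1$, $p$ a positive integer, let $\{b_{ij}:1\le j\le i\le n\}$ be real scalars with $b_{ij}:=b_{ji}$ for $i<j$, and suppose $\sigma_*:=\max_{ij}|b_{ij}|\le 1$; let $\sigma:=\max_i\sqrt{\sum_j b_{ij}^2}$. Then for any $u\in[n]$ and any $\mathbf{s}\in\mathcal{S}_{2p}$, $$\sum_{\mathbf{u}\in\Gamma_{\mathbf{s},u}} b_{u_1u_2}b_{u_2u_3}\cdots b_{u_{2p}u_1}\le \sigma^{2(m(\mathbf{s})-1)}.$$ In particular, if $X$ is the $n\times n$ symmetric random matrix with $X_{ij}=X_{ji}=g_{ij}b_{ij}$ ($i\ge j$), where $\{g_{ij}:i\ge j\}$ are i.i.d. $N(0,1)$, and $g\sim N(0,1)$, then $$\mathbb{E}\operatorname{Tr}[X^{2p}]\le n\sum_{\mathbf{s}\in\mathcal{S}_{2p}}\sigma^{2(m(\mathbf{s})-1)}\prod_{i\ge1}\mathbb{E}[g^i]^{n_i(\mathbf{s})}.$$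
   Context: $[n]=\{1,\dots,n\}$. Let $G_n$ be the complete graph on $[n]$ with self-loops, with edge set $\{\{u,u'\}:u,u'\in[n]\}$. Each $\mathbf{u}=(u_1,\dots,u_{2p})\in[n]^{2p}$ is identified with the cycle $u_1\to u_2\to\cdots\to u_{2p}\to u_1$ of length $2p$ in $G_n$. Denote by $n_i(\mathbf{u})$ the number of distinct edges visited exactly $i$ times by the cycle. A cycle is even if every edge it visits is visited an even number of times. The shape $\mathbf{s}(\mathbf{u})$ of $\mathbf{u}$ is obtained by relabeling the vertices in order of first appearance by $1,2,3,\dots$ (e.g. $7\to3\to5\to4\to3\to5\to4\to3\to7$ has shape $1\to2\to3\to4\to2\to3\to4\to2\to1$). $\mathcal{S}_{2p}$ is the set of shapes of even cycles of length $2p$; for $u\in[n]$, $\Gamma_{\mathbf{s},u}:=\{\mathbf{u}\in[n]^{2p}:\mathbf{s}(\mathbf{u})=\mathbf{s},\ u_1=u\}$. Since $n_i(\mathbf{u})$ depends only on the shape, write $n_i(\mathbf{s})$; $m(\mathbf{s}):=\max_i s_i$ is the number of distinct vertices visited by a cycle of shape $\mathbf{s}$. *)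

theory Defs
  imports "HOL-Probability.Probability"
begin

(* A cycle u = (u_1,...,u_{2p}) is a list of length 2p (list index k = u_{k+1}).
   Its k-th step (k < length u) traverses the undirected edge {u_k, u_{k+1 mod len}}. *)
definition cyc_edge :: "nat list \<Rightarrow> nat \<Rightarrow> nat set" where
  "cyc_edge u k = {u ! k, u ! ((k + 1) mod length u)}"

definition edge_visits :: "nat list \<Rightarrow> nat set \<Rightarrow> nat" where
  "edge_visits u e = card {k. k < length u \<and> cyc_edge u k = e}"

definition cyc_edges :: "nat list \<Rightarrow> nat set set" where
  "cyc_edges u = cyc_edge u ` {..<length u}"

definition n_visits :: "nat \<Rightarrow> nat list \<Rightarrow> nat" where
  "n_visits i u = card {e \<in> cyc_edges u. edge_visits u e = i}"

definition even_cycle :: "nat list \<Rightarrow> bool" where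
  "even_cycle u \<longleftrightarrow> (\<forall>e \<in> cyc_edges u. even (edge_visits u e))"

(* shape: relabel vertices in order of first appearance by 1,2,3,...;
   the label of x is 1 + number of distinct vertices occurring before the first occurrence of x *)
definition shape :: "nat list \<Rightarrow> nat list" where
  "shape u = map (\<lambda>x. card (set (takeWhile (\<lambda>y. y \<noteq> x) u)) + 1) u"

definition cycles :: "nat \<Rightarrow> nat \<Rightarrow> nat list set" where
  "cycles n p = {u. length u = 2 * p \<and> set u \<subseteq> {1..n}}"

definition shapes_even :: "nat \<Rightarrow> nat \<Rightarrow> nat list set" where
  "shapes_even n p = shape ` {u \<in> cycles n p. even_cycle u}"

definition Gamma :: "nat \<Rightarrow> nat \<Rightarrow> nat list \<Rightarrow> nat \<Rightarrow> nat list set" where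
  "Gamma n p s v = {u \<in> cycles n p. shape u = s \<and> u ! 0 = v}"

definition m_shape :: "nat list \<Rightarrow> nat" where
  "m_shape s = Max (set s)"

definition cycle_weight :: "(nat \<Rightarrow> nat \<Rightarrow> real) \<Rightarrow> nat list \<Rightarrow> real" where
  "cycle_weight b u = (\<Prod>k<length u. b (u ! k) (u ! ((k + 1) mod length u)))"

(* n x n matrices indexed by [n] = {1..n} *)
definition mat_mult :: "nat \<Rightarrow> (nat \<Rightarrow> nat \<Rightarrow> real) \<Rightarrow> (nat \<Rightarrow> nat \<Rightarrow> real) \<Rightarrow> nat \<Rightarrow> nat \<Rightarrow> real" where
  "mat_mult n A B = (\<lambda>i j. \<Sum>k\<in>{1..n}. A i k * B k j)"

primrec mat_pow :: "nat \<Rightarrow> (nat \<Rightarrow> nat \<Rightarrow> real) \<Rightarrow> nat \<Rightarrow> nat \<Rightarrow> nat \<Rightarrow> real" where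
  "mat_pow n A 0 = (\<lambda>i j. if i = j then 1 else 0)"
| "mat_pow n A (Suc k) = mat_mult n (mat_pow n A k) A"

definition mat_trace :: "nat \<Rightarrow> (nat \<Rightarrow> nat \<Rightarrow> real) \<Rightarrow> real" where
  "mat_trace n A = (\<Sum>i\<in>{1..n}. A i i)"

definition lower_idx :: "nat \<Rightarrow> (nat \<times> nat) set" where
  "lower_idx n = {(i, j). 1 \<le> j \<and> j \<le> i \<and> i \<le> n}"

definition gauss_mat :: "(nat \<Rightarrow> nat \<Rightarrow> real) \<Rightarrow> (nat \<times> nat \<Rightarrow> real) \<Rightarrow> nat \<Rightarrow> nat \<Rightarrow> real" where
  "gauss_mat b g = (\<lambda>i j. if j \<le> i then g (i, j) * b i j else g (j, i) * b j i)"

end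

theory Submission
  imports Defs
begin


definition lab :: "nat list \<Rightarrow> nat \<Rightarrow> nat" where
  "lab u x = card (set (takeWhile (\<lambda>y. y \<noteq> x) u)) + 1"

lemma shape_map: "shape u = map (lab u) u"
  by (simp add: shape_def lab_def)

lemma lab_take:
  assumes "x \<in> set u"
  shows "\<exists>i<length u. u!i = x \<and> (\<forall>j<i. u!j \<noteq> x) \<and> lab u x = card (set (take i u)) + 1"
proof -
  define P where "P = (\<lambda>y. y \<noteq> x)"
  define i where "i = length (takeWhile P u)"
  have tw: "takeWhile P u = take i u" unfolding i_def by (rule takeWhile_eq_take)
  have il: "i < length u"
  proof (rule ccontr)
    assume "\<not> i < length u"
    then have "i \<ge> length u" by simp
    then have "takeWhile P u = u" using tw by simp
    then have "\<forall>y\<in>set u. P y" by (metis set_takeWhileD)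
    then show False using assms by (auto simp: P_def)
  qed
  have "\<not> P (u!i)" unfolding i_def by (rule nth_length_takeWhile) (use il in \<open>simp add: i_def\<close>)
  then have ui: "u!i = x" by (simp add: P_def)
  have before: "u!j \<noteq> x" if "j < i" for j
  proof -
    have "takeWhile P u ! j = u ! j" using that unfolding i_def by (rule takeWhile_nth)
    moreover have "takeWhile P u ! j \<in> set (takeWhile P u)" using that by (simp add: i_def)
    ultimately have "P (u!j)" by (metis set_takeWhileD)
    then show ?thesis by (simp add: P_def)
  qed
  have "lab u x = card (set (take i u)) + 1"
    unfolding lab_def using tw by (simp add: P_def)
  then show ?thesis using il ui before by blast
qed

lemma lab_inj: "inj_on (lab u) (set u)"
proof (rule inj_onI, rule ccontr)
  fix x y assume x: "x \<in> set u" and y: "y \<in> set u" and eq: "lab u x = lab u y" and ne: "x \<noteq> y"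
  obtain i where i: "i<length u" "u!i = x" "\<forall>j<i. u!j \<noteq> x" "lab u x = card (set (take i u)) + 1"
    using lab_take[OF x] by blast
  obtain j where j: "j<length u" "u!j = y" "\<forall>k<j. u!k \<noteq> y" "lab u y = card (set (take j u)) + 1"
    using lab_take[OF y] by blast
  have "i \<noteq> j" using i j ne by auto
  have key: "card (set (take a u)) < card (set (take c u))"
    if "a < c" "c < length u" "u!a \<notin> set (take a u)" for a c
  proof (rule psubset_card_mono)
    show "finite (set (take c u))" by simp
    have "set (take a u) \<subseteq> set (take c u)" using that
      by (intro set_take_subset_set_take) simp
    moreover have "u!a \<in> set (take c u)"
    proof -
      have "take c u ! a = u!a" "a < length (take c u)" using that by auto
      then show ?thesis by (metis nth_mem)
    qed
    ultimately show "set (take a u) \<subset> set (take c u)" using that by blast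
  qed
  have ni: "u!i \<notin> set (take i u)" using i by (auto simp: in_set_conv_nth)
  have nj: "u!j \<notin> set (take j u)" using j by (auto simp: in_set_conv_nth)
  show False
  proof (cases "i < j")
    case True with key[OF True j(1) ni] i j eq show False by simp
  next
    case False with \<open>i\<noteq>j\<close> have "j < i" by simp
    with key[OF this i(1) nj] i j eq show False by simp
  qed
qed

lemma lab_range: assumes "x \<in> set u" shows "lab u x \<in> {1..card (set u)}"
proof -
  obtain i where i: "i<length u" "u!i = x" "\<forall>j<i. u!j \<noteq> x" "lab u x = card (set (take i u)) + 1"
    using lab_take[OF assms] by blast
  have "x \<notin> set (take i u)" using i by (auto simp: in_set_conv_nth)
  moreover have "set (take i u) \<subseteq> set u" by (rule set_take_subset)
  ultimately have "set (take i u) \<subset> set u" using assms by auto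
  hence "card (set (take i u)) < card (set u)" by (simp add: psubset_card_mono)
  thus ?thesis using i by simp
qed

lemma shape_nth_eq:
  assumes "i < length u" "j < length u"
  shows "(shape u ! i = shape u ! j) = (u!i = u!j)"
proof -
  have "shape u ! i = lab u (u!i)" "shape u ! j = lab u (u!j)" using assms by (simp_all add: shape_map)
  moreover have "u!i \<in> set u" "u!j \<in> set u" using assms by simp_all
  ultimately show ?thesis using inj_on_eq_iff[OF lab_inj] by simp
qed

lemma length_shape[simp]: "length (shape u) = length u"
  by (simp add: shape_map)

lemma set_shape: "set (shape u) = {1..card (set u)}"
proof -
  have "set (shape u) = lab u ` set u" by (simp add: shape_map)
  moreover have "lab u ` set u \<subseteq> {1..card (set u)}" using lab_range by blast
  moreover have "card (lab u ` set u) = card {1..card (set u)}"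
    using lab_inj card_image by fastforce
  ultimately show ?thesis by (metis card_subset_eq finite_atLeastAtMost)
qed

lemma m_shape_shape: "u \<noteq> [] \<Longrightarrow> m_shape (shape u) = card (set u)"
proof -
  assume "u \<noteq> []"
  then have "card (set u) \<ge> 1" by (simp add: Suc_le_eq card_gt_0_iff)
  then show ?thesis unfolding m_shape_def set_shape by (intro Max_eqI) auto
qed

definition samepat :: "nat list \<Rightarrow> nat list \<Rightarrow> bool" where
  "samepat u w \<longleftrightarrow> length u = length w \<and> (\<forall>i<length u. \<forall>j<length u. (u!i = u!j) = (w!i = w!j))"

lemma samepat_shape: "samepat u (shape u)"
  by (simp add: samepat_def shape_nth_eq)

lemma samepat_sym: "samepat u w \<Longrightarrow> samepat w u"
  by (auto simp: samepat_def)

lemma samepat_trans: "samepat u w \<Longrightarrow> samepat w z \<Longrightarrow> samepat u z"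
  by (auto simp: samepat_def)

lemma card_img_pat:
  assumes "\<And>k k'. k \<in> S \<Longrightarrow> k' \<in> S \<Longrightarrow> (A k = A k') = (B k = B k')"
  shows "card (A ` S) = card (B ` S)"
proof -
  have "card (A ` S) = card ((\<lambda>k. (A k, B k)) ` S)"
  proof -
    have "A ` S = fst ` ((\<lambda>k. (A k, B k)) ` S)" by (simp add: image_image)
    moreover have "inj_on fst ((\<lambda>k. (A k, B k)) ` S)"
      using assms by (auto simp: inj_on_def)
    ultimately show ?thesis by (simp add: card_image)
  qed
  also have "\<dots> = card (B ` S)"
  proof -
    have "B ` S = snd ` ((\<lambda>k. (A k, B k)) ` S)" by (simp add: image_image)
    moreover have "inj_on snd ((\<lambda>k. (A k, B k)) ` S)"
      using assms by (auto simp: inj_on_def)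
    ultimately show ?thesis by (simp add: card_image)
  qed
  finally show ?thesis .
qed

lemma dbl_iff:
  assumes "(a=c) = (a'=c')" "(a=d)=(a'=d')" "(b=c)=(b'=c')" "(b=d)=(b'=d')"
  shows "({a,b}={c,d}) = ({a',b'}={c',d'})"
  unfolding doubleton_eq_iff by (simp only: assms)

lemma edge_pat:
  assumes "samepat u w" "k < length u" "k' < length u"
  shows "(cyc_edge u k = cyc_edge u k') = (cyc_edge w k = cyc_edge w k')"
proof -
  let ?L = "length u"
  have L: "length w = ?L" using assms by (simp add: samepat_def)
  have p: "\<And>i j. i < ?L \<Longrightarrow> j < ?L \<Longrightarrow> (u!i = u!j) = (w!i = w!j)" using assms(1) by (simp add: samepat_def)
  have m1: "(k+1) mod ?L < ?L" "(k'+1) mod ?L < ?L" using assms by (auto intro!: mod_less_divisor)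
  show ?thesis unfolding cyc_edge_def L
    by (rule dbl_iff[OF p[OF assms(2) assms(3)] p[OF assms(2) m1(2)] p[OF m1(1) assms(3)] p[OF m1(1) m1(2)]])
qed

lemma edge_visits_eq:
  "edge_visits u (cyc_edge u k) = card {k'. k' < length u \<and> cyc_edge u k' = cyc_edge u k}"
  by (simp add: edge_visits_def)

lemma visits_pat:
  assumes "samepat u w" "k < length u"
  shows "edge_visits u (cyc_edge u k) = edge_visits w (cyc_edge w k)"
proof -
  have L: "length w = length u" using assms by (simp add: samepat_def)
  have "{k'. k' < length u \<and> cyc_edge u k' = cyc_edge u k} = {k'. k' < length w \<and> cyc_edge w k' = cyc_edge w k}"
    using edge_pat[OF assms(1) _ assms(2)] L by auto
  thus ?thesis by (simp add: edge_visits_def)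
qed

lemma even_cycle_alt: "even_cycle u \<longleftrightarrow> (\<forall>k<length u. even (edge_visits u (cyc_edge u k)))"
  by (auto simp: even_cycle_def cyc_edges_def)

lemma even_pat: assumes "samepat u w" shows "even_cycle u = even_cycle w"
proof -
  have "\<forall>k<length u. edge_visits u (cyc_edge u k) = edge_visits w (cyc_edge w k)"
    using visits_pat[OF assms] by blast
  moreover have "length w = length u" using assms by (simp add: samepat_def)
  ultimately show ?thesis unfolding even_cycle_alt by simp
qed

lemma n_visits_alt:
  "n_visits i u = card (cyc_edge u ` {k. k < length u \<and> edge_visits u (cyc_edge u k) = i})"
proof -
  have "{e \<in> cyc_edges u. edge_visits u e = i} = cyc_edge u ` {k. k < length u \<and> edge_visits u (cyc_edge u k) = i}"
    by (auto simp: cyc_edges_def)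
  thus ?thesis by (simp add: n_visits_def)
qed

lemma nvisits_pat: assumes "samepat u w" shows "n_visits i u = n_visits i w"
proof -
  have L: "length w = length u" using assms by (simp add: samepat_def)
  have S: "{k. k < length u \<and> edge_visits u (cyc_edge u k) = i} = {k. k < length w \<and> edge_visits w (cyc_edge w k) = i}"
    using visits_pat[OF assms] L by auto
  have "n_visits i w = card (cyc_edge w ` {k. k < length u \<and> edge_visits u (cyc_edge u k) = i})"
    unfolding n_visits_alt S L ..
  moreover have "card (cyc_edge u ` {k. k < length u \<and> edge_visits u (cyc_edge u k) = i}) = card (cyc_edge w ` {k. k < length u \<and> edge_visits u (cyc_edge u k) = i})"
    by (rule card_img_pat) (use edge_pat[OF assms] in auto)
  ultimately show ?thesis unfolding n_visits_alt by simp
qed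



fun ww :: "(nat\<Rightarrow>nat\<Rightarrow>real) \<Rightarrow> nat \<Rightarrow> nat list \<Rightarrow> nat \<Rightarrow> real" where
  "ww A i [] j = (if i = j then 1 else 0)"
| "ww A i (x#r) j = ww A i r x * A x j"

lemma mat_pow_ww:
  "mat_pow n A k i j = (\<Sum>r\<in>{r. set r \<subseteq> {1..n} \<and> length r = k}. ww A i r j)"
proof (induction k arbitrary: j)
  case 0
  have "{r. set r \<subseteq> {1..n} \<and> length r = 0} = {[]}" by auto
  then show ?case by simp
next
  case (Suc k)
  let ?W = "{r. set r \<subseteq> {1..n} \<and> length r = k}"
  have fin: "finite ?W" by (simp add: finite_lists_length_eq)
  have "(\<Sum>r\<in>{r. set r \<subseteq> {1..n} \<and> length r = Suc k}. ww A i r j)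
      = (\<Sum>q\<in>?W \<times> {1..n}. ww A i (snd q # fst q) j)"
    unfolding lists_length_Suc_eq
    by (subst sum.reindex) (auto simp: inj_on_def case_prod_beta)
  also have "\<dots> = (\<Sum>r\<in>?W. \<Sum>x\<in>{1..n}. ww A i r x * A x j)"
    by (simp add: sum.cartesian_product case_prod_beta)
  also have "\<dots> = (\<Sum>x\<in>{1..n}. (\<Sum>r\<in>?W. ww A i r x) * A x j)"
    by (subst sum.swap) (simp add: sum_distrib_right)
  also have "\<dots> = mat_pow n A (Suc k) i j"
    by (simp add: mat_mult_def Suc.IH)
  finally show ?case by simp
qed

definition pw :: "(nat\<Rightarrow>nat\<Rightarrow>real) \<Rightarrow> nat list \<Rightarrow> nat \<Rightarrow> real" where
  "pw A u j = (\<Prod>t<length u. A (u!t) ((u@[j])!(Suc t)))"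

lemma pw_snoc: "pw A (u@[x]) j = pw A u x * A x j"
proof -
  have "pw A (u@[x]) j = (\<Prod>t<length u. A ((u@[x])!t) ((u@[x]@[j])!(Suc t))) * A x j"
    by (simp add: pw_def nth_append)
  also have "(\<Prod>t<length u. A ((u@[x])!t) ((u@[x]@[j])!(Suc t))) = pw A u x"
    unfolding pw_def by (rule prod.cong) (auto simp: nth_append)
  finally show ?thesis .
qed

lemma ww_pw: "r \<noteq> [] \<Longrightarrow> ww A i r j = (if last r = i then pw A (rev r) j else 0)"
proof (induction r arbitrary: j)
  case Nil then show ?case by simp
next
  case (Cons x r)
  show ?case
  proof (cases "r = []")
    case True then show ?thesis by (simp add: pw_def)
  next
    case False
    then show ?thesis using Cons.IH[OF False] by (simp add: pw_snoc)
  qed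
qed

lemma cw_pw: assumes "u \<noteq> []" shows "cycle_weight A u = pw A u (u!0)"
  unfolding cycle_weight_def pw_def
proof (rule prod.cong)
  fix t assume "t \<in> {..<length u}"
  then have t: "t < length u" by simp
  show "A (u ! t) (u ! ((t + 1) mod length u)) = A (u ! t) ((u @ [u ! 0]) ! Suc t)"
  proof (cases "Suc t < length u")
    case True then show ?thesis by (simp add: nth_append)
  next
    case False then have "Suc t = length u" using t by simp
    then show ?thesis by (simp add: nth_append)
  qed
qed simp

lemma trace_expand:
  assumes "L > 0"
  shows "mat_trace n (mat_pow n A L) = (\<Sum>u\<in>{u. set u \<subseteq> {1..n} \<and> length u = L}. cycle_weight A u)"
proof -
  let ?W = "{r. set r \<subseteq> {1..n} \<and> length r = L}"
  have "mat_trace n (mat_pow n A L) = (\<Sum>i\<in>{1..n}. \<Sum>r\<in>?W. ww A i r i)"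
    by (simp add: mat_trace_def mat_pow_ww)
  also have "\<dots> = (\<Sum>r\<in>?W. \<Sum>i\<in>{1..n}. ww A i r i)" by (rule sum.swap)
  also have "\<dots> = (\<Sum>r\<in>?W. cycle_weight A (rev r))"
  proof (rule sum.cong)
    fix r assume r: "r \<in> ?W"
    then have ne: "r \<noteq> []" using assms by auto
    have lr: "last r \<in> {1..n}" using r ne last_in_set by blast
    have "(\<Sum>i\<in>{1..n}. ww A i r i) = (\<Sum>i\<in>{1..n}. if i = last r then pw A (rev r) i else 0)"
      using ne by (intro sum.cong) (auto simp: ww_pw)
    also have "\<dots> = pw A (rev r) (last r)" using lr by simp
    also have "\<dots> = cycle_weight A (rev r)" using ne by (simp add: cw_pw hd_conv_nth[symmetric] hd_rev)
    finally show "(\<Sum>i\<in>{1..n}. ww A i r i) = cycle_weight A (rev r)" .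
  qed simp
  also have "\<dots> = (\<Sum>u\<in>rev ` ?W. cycle_weight A u)"
    by (subst sum.reindex) (auto simp: inj_on_def)
  also have "rev ` ?W = ?W"
  proof
    show "rev ` ?W \<subseteq> ?W" by auto
    show "?W \<subseteq> rev ` ?W"
    proof
      fix x assume "x \<in> ?W"
      then have "rev x \<in> ?W" by simp
      then show "x \<in> rev ` ?W" by (metis rev_rev_ident imageI)
    qed
  qed
  finally show ?thesis .
qed

lemma tree_sum:
  fixes b :: "nat \<Rightarrow> nat \<Rightarrow> real" and N :: "nat set" and par :: "nat \<Rightarrow> nat"
  assumes "finite N" "0 \<notin> N" "\<And>k. k \<in> N \<Longrightarrow> par k \<in> insert 0 N \<and> par k < k" "v \<in> {1..n}"
    and row: "\<And>y. y \<in> {1..n} \<Longrightarrow> (\<Sum>x\<in>{1..n}. (b y x)^2) \<le> \<sigma>^2" and "\<sigma> \<ge> 0"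
  shows "(\<Sum>f\<in>Pi\<^sub>E N (\<lambda>_. {1..n}). \<Prod>k\<in>N. (b ((f(0:=v)) (par k)) (f k))^2) \<le> \<sigma>^(2*card N)"
  using assms(1-3)
proof (induction "card N" arbitrary: N)
  case 0
  then have "N = {}" by simp
  then show ?case by simp
next
  case (Suc c N)
  define k0 where "k0 = Max N"
  have ne: "N \<noteq> {}" using Suc.hyps(2) by auto
  have k0N: "k0 \<in> N" using Suc.prems ne by (simp add: k0_def)
  define N' where "N' = N - {k0}"
  have NN: "N = insert k0 N'" "k0 \<notin> N'" using k0N by (auto simp: N'_def)
  have fN': "finite N'" using Suc.prems by (simp add: N'_def)
  have cN': "c = card N'" using Suc.hyps(2) NN fN' by simp
  have lt: "k < k0" if "k \<in> N'" for k
    using that Suc.prems(1) by (auto simp: N'_def k0_def intro: Max_ge le_neq_implies_less)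
  have k0nz: "k0 \<noteq> 0" using k0N Suc.prems(2) by (metis gr0I)
  have parN': "par k \<in> insert 0 N' \<and> par k < k" if "k \<in> N'" for k
    using Suc.prems(3)[of k] that lt[OF that] by (auto simp: N'_def)
  have IH: "(\<Sum>f\<in>Pi\<^sub>E N' (\<lambda>_. {1..n}). \<Prod>k\<in>N'. (b ((f(0:=v)) (par k)) (f k))^2) \<le> \<sigma>^(2*card N')"
    using Suc.hyps(1)[OF cN' fN'] Suc.prems(2) parN' by (auto simp: N'_def)
  define T where "T g = (\<Prod>k\<in>N'. (b ((g(0:=v)) (par k)) (g k))^2)" for g :: "nat \<Rightarrow> nat"
  have par0: "par k0 \<noteq> k0" using Suc.prems(3)[OF k0N] by simp
  have "(\<Sum>f\<in>Pi\<^sub>E N (\<lambda>_. {1..n}). \<Prod>k\<in>N. (b ((f(0:=v)) (par k)) (f k))^2)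
     = (\<Sum>q\<in>{1..n} \<times> Pi\<^sub>E N' (\<lambda>_. {1..n}). \<Prod>k\<in>N. (b (((snd q)(k0 := fst q, 0:=v)) (par k)) (((snd q)(k0 := fst q)) k))^2)"
    unfolding NN(1) PiE_insert_eq
    by (subst sum.reindex[OF inj_combinator[OF NN(2)]]) (auto simp: case_prod_beta intro!: sum.cong prod.cong)
  also have "\<dots> = (\<Sum>q\<in>{1..n} \<times> Pi\<^sub>E N' (\<lambda>_. {1..n}). T (snd q) * (b (((snd q)(0:=v)) (par k0)) (fst q))^2)"
  proof (rule sum.cong[OF refl])
    fix q :: "nat \<times> (nat \<Rightarrow> nat)"
    have "(\<Prod>k\<in>N. (b (((snd q)(k0 := fst q, 0:=v)) (par k)) (((snd q)(k0 := fst q)) k))^2)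
        = (b (((snd q)(k0 := fst q, 0:=v)) (par k0)) (fst q))^2 * (\<Prod>k\<in>N'. (b (((snd q)(k0 := fst q, 0:=v)) (par k)) (((snd q)(k0 := fst q)) k))^2)"
      unfolding NN(1) using fN' NN(2) by simp
    also have "(\<Prod>k\<in>N'. (b (((snd q)(k0 := fst q, 0:=v)) (par k)) (((snd q)(k0 := fst q)) k))^2) = T (snd q)"
      unfolding T_def
    proof (rule prod.cong[OF refl])
      fix k assume k: "k \<in> N'"
      have "k \<noteq> k0" "par k \<noteq> k0" using lt[OF k] parN'[OF k] by auto
      then show "(b (((snd q)(k0 := fst q, 0:=v)) (par k)) (((snd q)(k0 := fst q)) k))^2 = (b (((snd q)(0:=v)) (par k)) (snd q k))^2"
        by simp
    qed
    also have "(b (((snd q)(k0 := fst q, 0:=v)) (par k0)) (fst q)) = b (((snd q)(0:=v)) (par k0)) (fst q)"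
      using par0 by simp
    finally show "(\<Prod>k\<in>N. (b (((snd q)(k0 := fst q, 0:=v)) (par k)) (((snd q)(k0 := fst q)) k))^2)
        = T (snd q) * (b (((snd q)(0:=v)) (par k0)) (fst q))^2" by (metis mult.commute)
  qed
  also have "\<dots> = (\<Sum>g\<in>Pi\<^sub>E N' (\<lambda>_. {1..n}). T g * (\<Sum>x\<in>{1..n}. (b ((g(0:=v)) (par k0)) x)^2))"
  proof -
    have "(\<Sum>q\<in>{1..n} \<times> Pi\<^sub>E N' (\<lambda>_. {1..n}). T (snd q) * (b (((snd q)(0:=v)) (par k0)) (fst q))^2)
       = (\<Sum>x\<in>{1..n}. \<Sum>g\<in>Pi\<^sub>E N' (\<lambda>_. {1..n}). T g * (b ((g(0:=v)) (par k0)) x)^2)"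
      by (subst sum.cartesian_product) (simp add: case_prod_beta)
    also have "\<dots> = (\<Sum>g\<in>Pi\<^sub>E N' (\<lambda>_. {1..n}). T g * (\<Sum>x\<in>{1..n}. (b ((g(0:=v)) (par k0)) x)^2))"
      by (subst sum.swap) (simp add: sum_distrib_left)
    finally show ?thesis .
  qed
  also have "\<dots> \<le> (\<Sum>g\<in>Pi\<^sub>E N' (\<lambda>_. {1..n}). T g * \<sigma>^2)"
  proof (rule sum_mono)
    fix g assume g: "g \<in> Pi\<^sub>E N' (\<lambda>_. {1..n})"
    have "(g(0:=v)) (par k0) \<in> {1..n}"
      using Suc.prems(3)[OF k0N] par0 g assms(4) by (auto simp: NN(1))
    then have "(\<Sum>x\<in>{1..n}. (b ((g(0:=v)) (par k0)) x)^2) \<le> \<sigma>^2" by (rule row)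
    moreover have "T g \<ge> 0" unfolding T_def by (simp add: prod_nonneg)
    ultimately show "T g * (\<Sum>x\<in>{1..n}. (b ((g(0:=v)) (par k0)) x)^2) \<le> T g * \<sigma>^2"
      by (simp add: mult_left_mono)
  qed
  also have "\<dots> = (\<Sum>g\<in>Pi\<^sub>E N' (\<lambda>_. {1..n}). T g) * \<sigma>^2" by (simp add: sum_distrib_right)
  also have "\<dots> \<le> \<sigma>^(2*card N') * \<sigma>^2"
    using IH unfolding T_def by (simp add: mult_right_mono)
  also have "\<dots> = \<sigma>^(2*card N)" proof -
    have "2 * card N = Suc (Suc (2 * card N'))" using Suc.hyps(2) cN' by simp
    then show ?thesis by (simp add: power2_eq_square)
  qed
  finally show ?case .
qed



lemma edge_b_eq:
  assumes "{x,y} = {x',y'}" and sym: "\<And>i j. i \<in> {1..n} \<Longrightarrow> j \<in> {1..n} \<Longrightarrow> b i j = b j i"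
    and "x \<in> {1..n}" "y \<in> {1..n}"
  shows "b x y = b x' y'"
  using assms(1) sym[OF assms(3,4)] by (auto simp: doubleton_eq_iff)

lemma cw_tree_bound:
  fixes b :: "nat \<Rightarrow> nat \<Rightarrow> real"
  assumes sym: "\<And>i j. i \<in> {1..n} \<Longrightarrow> j \<in> {1..n} \<Longrightarrow> b i j = b j i"
    and babs: "\<And>i j. i \<in> {1..n} \<Longrightarrow> j \<in> {1..n} \<Longrightarrow> \<bar>b i j\<bar> \<le> 1"
    and u: "set u \<subseteq> {1..n}" "length u > 0" "even_cycle u"
  shows "cycle_weight b u \<le> (\<Prod>k\<in>{k. 0 < k \<and> k < length u \<and> (\<forall>j<k. u!j \<noteq> u!k)}. (b (u!(k-1)) (u!k))^2)"
proof -
  let ?L = "length u"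
  define Nu where "Nu = {k. 0 < k \<and> k < ?L \<and> (\<forall>j<k. u!j \<noteq> u!k)}"
  define a where "a t = b (u!t) (u!((t+1) mod ?L))" for t
  define K where "K = (\<lambda>k. k - 1) ` Nu"
  have inset: "u!i \<in> {1..n}" if "i < ?L" for i using u that nth_mem by blast
  have modL: "(t+1) mod ?L < ?L" for t using u by simp
  have edgeK: "cyc_edge u (k-1) = {u!(k-1), u!k}" if "k \<in> Nu" for k
  proof -
    have "(k - 1 + 1) mod ?L = k" using that by (auto simp: Nu_def)
    then show ?thesis by (simp add: cyc_edge_def)
  qed
  have dist: "k = k'" if "k \<in> Nu" "k' \<in> Nu" "cyc_edge u (k-1) = cyc_edge u (k'-1)" for k k'
  proof (rule ccontr)
    have gen: False if "k1 \<in> Nu" "k2 \<in> Nu" "k1 < k2" "cyc_edge u (k1-1) = cyc_edge u (k2-1)" for k1 k2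
    proof -
      have "u!k2 \<in> {u!(k1-1), u!k1}" using that edgeK by auto
      moreover have "k1 - 1 < k2" "k1 < k2" using that by auto
      ultimately show False using that(2) by (auto simp: Nu_def)
    qed
    assume "k \<noteq> k'"
    then show False using gen[OF that(1,2)] gen[OF that(2,1)] that(3) by (cases "k < k'") auto
  qed
  have KL: "t < ?L" if "t \<in> K" for t using that by (auto simp: K_def Nu_def)
  have partner: "\<exists>t'. t' < ?L \<and> t' \<noteq> t \<and> cyc_edge u t' = cyc_edge u t" if "t \<in> K" for t
  proof -
    let ?S = "{k. k < ?L \<and> cyc_edge u k = cyc_edge u t}"
    have "t \<in> ?S" using KL[OF that] by simp
    have "even (card ?S)" using u(3) KL[OF that] by (simp add: even_cycle_alt edge_visits_def)
    moreover have "card ?S \<noteq> 0" using \<open>t \<in> ?S\<close> by (auto simp: card_eq_0_iff)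
    ultimately have "card ?S \<ge> 2" by presburger
    have "\<not> ?S \<subseteq> {t}"
    proof
      assume "?S \<subseteq> {t}"
      then have "card ?S \<le> card {t}" by (intro card_mono) auto
      then show False using \<open>card ?S \<ge> 2\<close> by simp
    qed
    then show ?thesis by blast
  qed
  define \<pi> where "\<pi> t = (SOME t'. t' < ?L \<and> t' \<noteq> t \<and> cyc_edge u t' = cyc_edge u t)" for t
  have \<pi>: "\<pi> t < ?L \<and> \<pi> t \<noteq> t \<and> cyc_edge u (\<pi> t) = cyc_edge u t" if "t \<in> K" for t
    unfolding \<pi>_def using someI_ex[OF partner[OF that]] .
  have \<pi>notK: "\<pi> t \<notin> K" if tK: "t \<in> K" for t
  proof
    assume "\<pi> t \<in> K"
    then obtain k' where k': "k' \<in> Nu" "\<pi> t = k' - 1" unfolding K_def by blast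
    obtain k where k: "k \<in> Nu" "t = k - 1" using tK unfolding K_def by blast
    have "k = k'" using dist[OF k(1) k'(1)] \<pi>[OF tK] k k' by simp
    then show False using \<pi>[OF tK] k k' by simp
  qed
  have \<pi>inj: "inj_on \<pi> K"
  proof (rule inj_onI)
    fix t t' assume "t \<in> K" "t' \<in> K" "\<pi> t = \<pi> t'"
    then obtain k k' where "k \<in> Nu" "t = k - 1" "k' \<in> Nu" "t' = k' - 1" by (auto simp: K_def)
    moreover have "cyc_edge u t = cyc_edge u t'" using \<pi> \<open>t \<in> K\<close> \<open>t' \<in> K\<close> \<open>\<pi> t = \<pi> t'\<close> by metis
    ultimately show "t = t'" using dist by metis
  qed
  have aeq: "\<bar>a (\<pi> t)\<bar> = \<bar>a t\<bar>" if "t \<in> K" for t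
  proof -
    have "{u!(\<pi> t), u!((\<pi> t + 1) mod ?L)} = {u!t, u!((t+1) mod ?L)}"
      using \<pi>[OF that] by (simp add: cyc_edge_def)
    then have "b (u!(\<pi> t)) (u!((\<pi> t + 1) mod ?L)) = b (u!t) (u!((t+1) mod ?L))"
    proof (rule edge_b_eq[where n=n])
      show "\<And>i j. i \<in> {1..n} \<Longrightarrow> j \<in> {1..n} \<Longrightarrow> b i j = b j i" by (rule sym)
      show "u!(\<pi> t) \<in> {1..n}" using inset \<pi>[OF that] by blast
      show "u!((\<pi> t + 1) mod ?L) \<in> {1..n}" using inset modL by blast
    qed
    then show ?thesis by (simp add: a_def)
  qed
  have abnd: "\<bar>a t\<bar> \<le> 1" if "t < ?L" for t
    unfolding a_def using babs inset that modL by blast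
  have finK: "finite K" unfolding K_def Nu_def by simp
  have sub: "K \<union> \<pi> ` K \<subseteq> {..<?L}" using KL \<pi> by auto
  have "cycle_weight b u \<le> \<bar>cycle_weight b u\<bar>" by simp
  also have "\<dots> = (\<Prod>t<?L. \<bar>a t\<bar>)" by (simp add: cycle_weight_def a_def abs_prod)
  also have "\<dots> = (\<Prod>t\<in>K \<union> \<pi> ` K. \<bar>a t\<bar>) * (\<Prod>t\<in>{..<?L} - (K \<union> \<pi> ` K). \<bar>a t\<bar>)"
    using prod.subset_diff[OF sub] by (simp add: mult.commute)
  also have "\<dots> \<le> (\<Prod>t\<in>K \<union> \<pi> ` K. \<bar>a t\<bar>) * 1"
    by (rule mult_left_mono) (auto intro!: prod_le_1 abnd simp: prod_nonneg)
  also have "(\<Prod>t\<in>K \<union> \<pi> ` K. \<bar>a t\<bar>) = (\<Prod>t\<in>K. \<bar>a t\<bar>) * (\<Prod>t\<in>\<pi> ` K. \<bar>a t\<bar>)"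
    using \<pi>notK finK by (intro prod.union_disjoint) auto
  also have "(\<Prod>t\<in>\<pi> ` K. \<bar>a t\<bar>) = (\<Prod>t\<in>K. \<bar>a t\<bar>)"
    using prod.reindex[OF \<pi>inj, of "\<lambda>t. \<bar>a t\<bar>"] aeq by simp
  also have "(\<Prod>t\<in>K. \<bar>a t\<bar>) * (\<Prod>t\<in>K. \<bar>a t\<bar>) = (\<Prod>t\<in>K. (a t)^2)"
    by (simp add: prod.distrib[symmetric] power2_eq_square abs_mult_self_eq)
  also have "\<dots> = (\<Prod>k\<in>Nu. (a (k-1))^2)"
  proof -
    have "inj_on (\<lambda>k. k - 1) Nu" by (auto simp: inj_on_def Nu_def)
    then show ?thesis unfolding K_def by (simp add: prod.reindex)
  qed
  also have "\<dots> = (\<Prod>k\<in>Nu. (b (u!(k-1)) (u!k))^2)"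
  proof (rule prod.cong[OF refl])
    fix k assume "k \<in> Nu"
    then have "(k - 1 + 1) mod ?L = k" by (auto simp: Nu_def)
    then show "(a (k-1))^2 = (b (u!(k-1)) (u!k))^2" by (simp add: a_def)
  qed
  finally show ?thesis by (simp add: Nu_def)
qed



definition Fs :: "nat list \<Rightarrow> nat set" where
  "Fs s = {k. k < length s \<and> (\<forall>j<k. s!j \<noteq> s!k)}"

definition Ns :: "nat list \<Rightarrow> nat set" where
  "Ns s = {k. 0 < k \<and> k < length s \<and> (\<forall>j<k. s!j \<noteq> s!k)}"

definition fo :: "nat list \<Rightarrow> nat \<Rightarrow> nat" where
  "fo s i = (LEAST j. s!j = s!i)"

definition par :: "nat list \<Rightarrow> nat \<Rightarrow> nat" where
  "par s k = fo s (k - 1)"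

lemma fo_props:
  assumes "i < length s"
  shows "fo s i \<in> Fs s" "s!(fo s i) = s!i" "fo s i \<le> i"
proof -
  show e: "s!(fo s i) = s!i" unfolding fo_def by (rule LeastI[of _ i]) simp
  show le: "fo s i \<le> i" unfolding fo_def by (rule Least_le) simp
  have "s!j \<noteq> s!(fo s i)" if "j < fo s i" for j
    using not_less_Least[of j "\<lambda>j. s!j = s!i"] that e by (simp add: fo_def)
  then show "fo s i \<in> Fs s" using le assms by (auto simp: Fs_def)
qed

lemma par_props:
  assumes "k \<in> Ns s"
  shows "par s k \<in> insert 0 (Ns s)" "par s k < k" "s!(par s k) = s!(k-1)"
proof -
  have k: "0 < k" "k < length s" using assms by (auto simp: Ns_def)
  then have "k - 1 < length s" by simp
  note f = fo_props[OF this]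
  show "s!(par s k) = s!(k-1)" using f by (simp add: par_def)
  show "par s k < k" using f k by (simp add: par_def)
  show "par s k \<in> insert 0 (Ns s)" using f(1) by (auto simp: par_def Fs_def Ns_def)
qed

lemma Ns_Fs: "Ns s = Fs s - {0}"
  by (auto simp: Ns_def Fs_def)

lemma zero_Fs: "length s > 0 \<Longrightarrow> 0 \<in> Fs s"
  by (simp add: Fs_def)

lemma card_Fs: "card (Fs s) = card (set s)"
proof -
  have "bij_betw (\<lambda>k. s!k) (Fs s) (set s)"
  proof (rule bij_betw_imageI)
    show "inj_on (\<lambda>k. s!k) (Fs s)"
    proof (rule inj_onI)
      fix k k' assume kk: "k \<in> Fs s" "k' \<in> Fs s" "s!k = s!k'"
      show "k = k'"
      proof (rule ccontr)
        assume "k \<noteq> k'"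
        then have "k < k' \<or> k' < k" by arith
        then show False using kk by (auto simp: Fs_def)
      qed
    qed
    show "(\<lambda>k. s!k) ` Fs s = set s"
    proof
      show "(\<lambda>k. s!k) ` Fs s \<subseteq> set s" by (auto simp: Fs_def)
      show "set s \<subseteq> (\<lambda>k. s!k) ` Fs s"
      proof
        fix x assume "x \<in> set s"
        then obtain i where i: "i < length s" "s!i = x" by (auto simp: in_set_conv_nth)
        then show "x \<in> (\<lambda>k. s!k) ` Fs s" using fo_props[OF i(1)] by (metis imageI)
      qed
    qed
  qed
  then show ?thesis by (rule bij_betw_same_card)
qed

lemma samepat_Ns: "samepat u s \<Longrightarrow> {k. 0 < k \<and> k < length u \<and> (\<forall>j<k. u!j \<noteq> u!k)} = Ns s"
  by (auto simp: samepat_def Ns_def)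

lemma samepat_nth: "samepat u s \<Longrightarrow> i < length s \<Longrightarrow> j < length s \<Longrightarrow> (u!i = u!j) = (s!i = s!j)"
  by (auto simp: samepat_def)

lemma part1:
  fixes b :: "nat \<Rightarrow> nat \<Rightarrow> real"
  assumes sym: "\<And>i j. i \<in> {1..n} \<Longrightarrow> j \<in> {1..n} \<Longrightarrow> b i j = b j i"
    and babs: "\<And>i j. i \<in> {1..n} \<Longrightarrow> j \<in> {1..n} \<Longrightarrow> \<bar>b i j\<bar> \<le> 1"
    and row: "\<And>y. y \<in> {1..n} \<Longrightarrow> (\<Sum>x\<in>{1..n}. (b y x)^2) \<le> \<sigma>^2" and "\<sigma> \<ge> 0"
    and v: "v \<in> {1..n}" and s: "s \<in> shapes_even n p" and "p > 0"
  shows "(\<Sum>u\<in>Gamma n p s v. cycle_weight b u) \<le> \<sigma> ^ (2 * (m_shape s - 1))"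
proof -
  obtain w where w: "w \<in> cycles n p" "even_cycle w" "s = shape w"
    using s by (auto simp: shapes_even_def)
  have Ls: "length s = 2*p" using w by (simp add: cycles_def)
  have sne: "length s > 0" using Ls \<open>p > 0\<close> by simp
  have wne: "w \<noteq> []" using Ls w sne by auto
  have ms: "m_shape s = card (set s)"
    using m_shape_shape[OF wne] w(3) set_shape[of w] by simp
  have cN: "card (Ns s) = m_shape s - 1"
  proof -
    have "finite (Fs s)" by (simp add: Fs_def)
    then have "card (Ns s) = card (Fs s) - 1" using zero_Fs[OF sne] by (simp add: Ns_Fs)
    then show ?thesis using card_Fs ms by simp
  qed
  have finN: "finite (Ns s)" by (simp add: Ns_def)
  have sw: "samepat s w" using w(3) samepat_shape[of w] samepat_sym by simp
  define G' where "G' f = (\<Prod>k\<in>Ns s. (b ((f(0:=v)) (par s k)) (f k))^2)" for f :: "nat \<Rightarrow> nat"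
  define r where "r u = restrict (\<lambda>k. u!k) (Ns s)" for u :: "nat list"
  have Gam: "samepat u s \<and> length u = length s \<and> set u \<subseteq> {1..n} \<and> u!0 = v \<and> even_cycle u"
    if "u \<in> Gamma n p s v" for u
  proof -
    have "shape u = s" "u \<in> cycles n p" "u!0 = v" using that by (auto simp: Gamma_def)
    then have sp: "samepat u s" using samepat_shape[of u] by simp
    moreover have "even_cycle u" using even_pat[OF samepat_trans[OF sp sw]] w(2) by simp
    ultimately show ?thesis using \<open>u \<in> cycles n p\<close> \<open>u!0 = v\<close> Ls by (auto simp: cycles_def)
  qed
  have finG: "finite (Gamma n p s v)"
  proof (rule finite_subset)
    show "Gamma n p s v \<subseteq> {u. set u \<subseteq> {1..n} \<and> length u = 2*p}" by (auto simp: Gamma_def cycles_def)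
  qed (simp add: finite_lists_length_eq)
  have step1: "cycle_weight b u \<le> G' (r u)" if "u \<in> Gamma n p s v" for u
  proof -
    note g = Gam[OF that]
    have "cycle_weight b u \<le> (\<Prod>k\<in>{k. 0 < k \<and> k < length u \<and> (\<forall>j<k. u!j \<noteq> u!k)}. (b (u!(k-1)) (u!k))^2)"
      by (rule cw_tree_bound[OF sym babs]) (use g sne in auto)
    also have "\<dots> = (\<Prod>k\<in>Ns s. (b (u!(k-1)) (u!k))^2)" using samepat_Ns[of u s] g by simp
    also have "\<dots> = G' (r u)" unfolding G'_def r_def
    proof (rule prod.cong[OF refl])
      fix k assume k: "k \<in> Ns s"
      note pp = par_props[OF k]
      have kl: "k < length s" "k - 1 < length s" "par s k < length s" using k pp by (auto simp: Ns_def)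
      have "u!(par s k) = u!(k-1)" using samepat_nth[OF _ kl(3) kl(2)] g pp(3) by blast
      moreover have "((restrict (\<lambda>k. u!k) (Ns s))(0:=v)) (par s k) = u!(par s k)"
        using pp(1) g by auto
      ultimately show "(b (u!(k-1)) (u!k))^2 = (b (((restrict (\<lambda>k. u!k) (Ns s))(0:=v)) (par s k)) (restrict (\<lambda>k. u!k) (Ns s) k))^2"
        using k by simp
    qed
    finally show ?thesis .
  qed
  have rinj: "inj_on r (Gamma n p s v)"
  proof (rule inj_onI)
    fix u u' assume u: "u \<in> Gamma n p s v" and u': "u' \<in> Gamma n p s v" and eq: "r u = r u'"
    note g = Gam[OF u] and g' = Gam[OF u']
    have onN: "u!k = u'!k" if "k \<in> Ns s" for k
      using fun_cong[OF eq, of k] that by (simp add: r_def)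
    show "u = u'"
    proof (rule nth_equalityI)
      show "length u = length u'" using g g' by simp
      fix i assume "i < length u"
      then have i: "i < length s" using g by simp
      note f = fo_props[OF i]
      have fl: "fo s i < length s" using f(1) by (simp add: Fs_def)
      have a: "u!(fo s i) = u!i" using samepat_nth[OF _ fl i] g f(2) by blast
      have a': "u'!(fo s i) = u'!i" using samepat_nth[OF _ fl i] g' f(2) by blast
      have "u!(fo s i) = u'!(fo s i)"
      proof (cases "fo s i = 0")
        case True then show ?thesis using g g' by simp
      next
        case False then have "fo s i \<in> Ns s" using f(1) by (simp add: Ns_Fs)
        then show ?thesis by (rule onN)
      qed
      then show "u!i = u'!i" using a a' by simp
    qed
  qed
  have rimg: "r ` Gamma n p s v \<subseteq> Pi\<^sub>E (Ns s) (\<lambda>_. {1..n})"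
  proof
    fix f assume "f \<in> r ` Gamma n p s v"
    then obtain u where u: "u \<in> Gamma n p s v" "f = r u" by blast
    note g = Gam[OF u(1)]
    show "f \<in> Pi\<^sub>E (Ns s) (\<lambda>_. {1..n})"
      unfolding u(2) r_def using g by (auto simp: Ns_def)
  qed
  have "(\<Sum>u\<in>Gamma n p s v. cycle_weight b u) \<le> (\<Sum>u\<in>Gamma n p s v. G' (r u))"
    by (rule sum_mono) (rule step1)
  also have "\<dots> = (\<Sum>f\<in>r ` Gamma n p s v. G' f)"
    using sum.reindex[OF rinj, of G'] by simp
  also have "\<dots> \<le> (\<Sum>f\<in>Pi\<^sub>E (Ns s) (\<lambda>_. {1..n}). G' f)"
    by (rule sum_mono2) (use rimg finN in \<open>auto simp: finite_PiE G'_def intro: prod_nonneg\<close>)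
  also have "\<dots> \<le> \<sigma>^(2 * card (Ns s))" unfolding G'_def
    by (rule tree_sum) (use finN par_props v row \<open>\<sigma> \<ge> 0\<close> in \<open>auto simp: Ns_def\<close>)
  finally show ?thesis using cN by simp
qed



abbreviation mom :: "nat \<Rightarrow> real" where
  "mom i \<equiv> (\<integral>x. x ^ i \<partial>std_normal_distribution)"

lemma psN: "prob_space std_normal_distribution"
  by (rule prob_space_normal_density) simp

lemma mom0: "mom 0 = 1"
  using prob_space.prob_space[OF psN] by simp

lemma mom_odd: "odd i \<Longrightarrow> mom i = 0"
  by (rule integral_std_normal_distribution_moment_odd)

lemma mom_even_nonneg: "even i \<Longrightarrow> mom i \<ge> 0"
  by (rule integral_nonneg_AE) (auto simp: zero_le_even_power)

lemma psf: "product_sigma_finite (\<lambda>_::nat\<times>nat. std_normal_distribution)"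
  unfolding product_sigma_finite_def using prob_space_imp_sigma_finite[OF psN] by simp

definition ix :: "nat list \<Rightarrow> nat \<Rightarrow> nat \<times> nat" where
  "ix u k = (max (u!k) (u!((k+1) mod length u)), min (u!k) (u!((k+1) mod length u)))"

definition cnt :: "nat list \<Rightarrow> nat \<times> nat \<Rightarrow> nat" where
  "cnt u ij = card {k. k < length u \<and> ix u k = ij}"

lemma maxmin_eq: "((max a b, min a b) = (max c d, min c d)) = ({a,b} = {c,(d::nat)})"
  by (auto simp: doubleton_eq_iff max_def min_def)

lemma ix_eq: "(ix u k = ix u k') = (cyc_edge u k = cyc_edge u k')"
  unfolding ix_def cyc_edge_def by (rule maxmin_eq)

lemma gauss_entry:
  assumes sym: "\<And>i j. i \<in> {1..n} \<Longrightarrow> j \<in> {1..n} \<Longrightarrow> b i j = b j i"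
    and "i \<in> {1..n}" "j \<in> {1..n}"
  shows "gauss_mat b g i j = g (max i j, min i j) * b i j"
  using sym[OF assms(2,3)] by (auto simp: gauss_mat_def max_def min_def)

lemma cw_gauss:
  assumes sym: "\<And>i j. i \<in> {1..n} \<Longrightarrow> j \<in> {1..n} \<Longrightarrow> b i j = b j i"
    and u: "set u \<subseteq> {1..n}" "length u > 0"
  shows "cycle_weight (gauss_mat b g) u = cycle_weight b u * (\<Prod>ij\<in>lower_idx n. g ij ^ cnt u ij)"
proof -
  let ?L = "length u"
  have inset: "u!i \<in> {1..n}" if "i < ?L" for i using u that nth_mem by blast
  have "cycle_weight (gauss_mat b g) u = (\<Prod>k<?L. g (ix u k) * b (u!k) (u!((k+1) mod ?L)))"
    unfolding cycle_weight_def
  proof (rule prod.cong[OF refl])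
    fix k assume "k \<in> {..<?L}"
    then have k: "k < ?L" by simp
    have "(k+1) mod ?L < ?L" using u(2) by simp
    then have i2: "u!((k+1) mod ?L) \<in> {1..n}" by (rule inset)
    show "gauss_mat b g (u ! k) (u ! ((k + 1) mod ?L)) = g (ix u k) * b (u!k) (u!((k+1) mod ?L))"
      unfolding ix_def by (rule gauss_entry[OF sym inset[OF k] i2])
  qed
  also have "\<dots> = (\<Prod>k<?L. g (ix u k)) * cycle_weight b u"
    by (simp add: prod.distrib cycle_weight_def)
  also have "(\<Prod>k<?L. g (ix u k)) = (\<Prod>ij\<in>lower_idx n. g ij ^ cnt u ij)"
  proof -
    have fin: "finite (lower_idx n)"
      by (rule finite_subset[of _ "{0..n} \<times> {0..n}"]) (auto simp: lower_idx_def)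
    have img: "ix u ` {..<?L} \<subseteq> lower_idx n"
    proof -
      have "u!((k+1) mod ?L) \<in> {1..n}" for k using u(2) by (intro inset) simp
      then show ?thesis using inset by (auto simp: ix_def lower_idx_def)
    qed
    have "(\<Prod>k<?L. g (ix u k)) = (\<Prod>ij\<in>lower_idx n. \<Prod>k\<in>{k. k \<in> {..<?L} \<and> ix u k = ij}. g (ix u k))"
      by (rule prod.group[symmetric]) (use fin img in auto)
    also have "\<dots> = (\<Prod>ij\<in>lower_idx n. g ij ^ cnt u ij)"
      by (rule prod.cong[OF refl]) (simp add: cnt_def)
    finally show ?thesis .
  qed
  finally show ?thesis by (simp add: mult.commute)
qed

lemma E_cycle:
  assumes sym: "\<And>i j. i \<in> {1..n} \<Longrightarrow> j \<in> {1..n} \<Longrightarrow> b i j = b j i"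
    and u: "set u \<subseteq> {1..n}" "length u > 0"
  shows "integrable (\<Pi>\<^sub>M ij\<in>lower_idx n. std_normal_distribution) (\<lambda>g. cycle_weight (gauss_mat b g) u)"
    "(\<integral>g. cycle_weight (gauss_mat b g) u \<partial>(\<Pi>\<^sub>M ij\<in>lower_idx n. std_normal_distribution))
       = cycle_weight b u * (\<Prod>ij\<in>lower_idx n. mom (cnt u ij))"
proof -
  have fin: "finite (lower_idx n)"
    by (rule finite_subset[of _ "{0..n} \<times> {0..n}"]) (auto simp: lower_idx_def)
  have eq: "(\<lambda>g. cycle_weight (gauss_mat b g) u) = (\<lambda>g. cycle_weight b u * (\<Prod>ij\<in>lower_idx n. (\<lambda>x. x ^ cnt u ij) (g ij)))"
    using cw_gauss[OF sym u] by simp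
  have int: "integrable (\<Pi>\<^sub>M ij\<in>lower_idx n. std_normal_distribution) (\<lambda>g. (\<Prod>ij\<in>lower_idx n. (\<lambda>x. x ^ cnt u ij) (g ij)))"
    by (rule product_sigma_finite.product_integrable_prod[OF psf fin])
       (rule integrable_std_normal_distribution_moment)
  show "integrable (\<Pi>\<^sub>M ij\<in>lower_idx n. std_normal_distribution) (\<lambda>g. cycle_weight (gauss_mat b g) u)"
    unfolding eq using int by (rule integrable_mult_right)
  have "(\<integral>g. (\<Prod>ij\<in>lower_idx n. (\<lambda>x. x ^ cnt u ij) (g ij)) \<partial>(\<Pi>\<^sub>M ij\<in>lower_idx n. std_normal_distribution))
      = (\<Prod>ij\<in>lower_idx n. mom (cnt u ij))"
    by (rule product_sigma_finite.product_integral_prod[OF psf fin])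
       (rule integrable_std_normal_distribution_moment)
  then show "(\<integral>g. cycle_weight (gauss_mat b g) u \<partial>(\<Pi>\<^sub>M ij\<in>lower_idx n. std_normal_distribution))
       = cycle_weight b u * (\<Prod>ij\<in>lower_idx n. mom (cnt u ij))"
    unfolding eq by simp
qed

lemma mom_prod:
  assumes u: "set u \<subseteq> {1..n}" "length u = L" "L > 0"
  shows "(\<Prod>ij\<in>lower_idx n. mom (cnt u ij)) = (\<Prod>i\<in>{1..L}. mom i ^ n_visits i u)"
proof -
  have fin: "finite (lower_idx n)"
    by (rule finite_subset[of _ "{0..n} \<times> {0..n}"]) (auto simp: lower_idx_def)
  have inset: "u!i \<in> {1..n}" if "i < L" for i using u that nth_mem by blast
  define J where "J = ix u ` {..<L}"
  have JI: "J \<subseteq> lower_idx n"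
  proof -
    have "u!((k+1) mod L) \<in> {1..n}" for k using u by (intro inset) simp
    then show ?thesis using inset u by (auto simp: ix_def lower_idx_def J_def)
  qed
  have "(\<Prod>ij\<in>lower_idx n. mom (cnt u ij)) = (\<Prod>ij\<in>J. mom (cnt u ij))"
  proof (rule prod.mono_neutral_right[OF fin JI])
    show "\<forall>ij\<in>lower_idx n - J. mom (cnt u ij) = 1"
    proof
      fix ij assume a: "ij \<in> lower_idx n - J"
      have "{k. k < length u \<and> ix u k = ij} = {}" using a u by (auto simp: J_def)
      then have "cnt u ij = 0" unfolding cnt_def by (metis card.empty)
      then show "mom (cnt u ij) = 1" using mom0 by simp
    qed
  qed
  also have "\<dots> = (\<Prod>i\<in>{1..L}. \<Prod>ij\<in>{ij. ij \<in> J \<and> cnt u ij = i}. mom (cnt u ij))"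
  proof (rule prod.group[symmetric])
    show "finite J" by (simp add: J_def)
    show "finite {1..L}" by simp
    show "cnt u ` J \<subseteq> {1..L}"
    proof
      fix c assume "c \<in> cnt u ` J"
      then obtain k where k: "k < L" "c = cnt u (ix u k)" by (auto simp: J_def)
      have "k \<in> {k'. k' < length u \<and> ix u k' = ix u k}" using k u by simp
      then have "cnt u (ix u k) \<ge> 1" unfolding cnt_def
        by (metis (no_types, lifting) One_nat_def Suc_leI card_gt_0_iff empty_iff finite_nat_set_iff_bounded mem_Collect_eq)
      moreover have "cnt u (ix u k) \<le> L" unfolding cnt_def
        using card_mono[of "{..<L}" "{k'. k' < length u \<and> ix u k' = ix u k}"] u by auto
      ultimately show "c \<in> {1..L}" using k by simp
    qed
  qed
  also have "\<dots> = (\<Prod>i\<in>{1..L}. mom i ^ n_visits i u)"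
  proof (rule prod.cong[OF refl])
    fix i assume "i \<in> {1..L}"
    have cntk: "cnt u (ix u k) = edge_visits u (cyc_edge u k)" for k
      unfolding cnt_def edge_visits_def ix_eq ..
    have set: "{ij. ij \<in> J \<and> cnt u ij = i} = ix u ` {k. k < L \<and> edge_visits u (cyc_edge u k) = i}"
      by (auto simp: J_def cntk)
    have "card {ij. ij \<in> J \<and> cnt u ij = i} = n_visits i u"
      unfolding set n_visits_alt u(2)
      by (rule card_img_pat) (simp add: ix_eq)
    then show "(\<Prod>ij\<in>{ij. ij \<in> J \<and> cnt u ij = i}. mom (cnt u ij)) = mom i ^ n_visits i u"
      by simp
  qed
  finally show ?thesis .
qed

lemma odd_vanish:
  assumes u: "length u = L" "L > 0" and ne: "\<not> even_cycle u"
  shows "(\<Prod>i\<in>{1..L}. mom i ^ n_visits i u) = 0"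
proof -
  obtain k where k: "k < L" "odd (edge_visits u (cyc_edge u k))"
    using ne u by (auto simp: even_cycle_alt)
  define i where "i = edge_visits u (cyc_edge u k)"
  have kin: "k \<in> {k'. k' < length u \<and> cyc_edge u k' = cyc_edge u k}" using k u by simp
  have "i \<ge> 1" using k(2) by (simp add: i_def) presburger
  moreover have "i \<le> L" unfolding i_def edge_visits_def
    using card_mono[of "{..<L}" "{k'. k' < length u \<and> cyc_edge u k' = cyc_edge u k}"] u by auto
  moreover have "n_visits i u \<ge> 1"
  proof -
    have "cyc_edge u k \<in> {e \<in> cyc_edges u. edge_visits u e = i}"
      using k u by (auto simp: i_def cyc_edges_def)
    moreover have "finite {e \<in> cyc_edges u. edge_visits u e = i}" by (simp add: cyc_edges_def)
    ultimately show ?thesis unfolding n_visits_def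
      by (metis One_nat_def Suc_leI card_gt_0_iff empty_iff)
  qed
  ultimately show ?thesis using k(2) mom_odd[of i]
    by (intro prod_zero) (auto simp: i_def intro!: bexI[of _ i] zero_power)
qed



lemma Gamma_even:
  assumes "s \<in> shapes_even n p" "shape u = s"
  shows "even_cycle u"
proof -
  obtain w where w: "w \<in> cycles n p" "even_cycle w" "s = shape w"
    using assms(1) by (auto simp: shapes_even_def)
  have "samepat s w" using w(3) samepat_shape[of w] samepat_sym by simp
  moreover have "samepat u s" using samepat_shape[of u] assms(2) by simp
  ultimately show ?thesis using even_pat samepat_trans w(2) by blast
qed

lemma shape_even: assumes "s \<in> shapes_even n p" shows "even_cycle s"
proof -
  obtain w where w: "w \<in> cycles n p" "even_cycle w" "s = shape w"
    using assms by (auto simp: shapes_even_def)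
  have "samepat s w" using w(3) samepat_shape[of w] samepat_sym by simp
  then show ?thesis using even_pat w(2) by blast
qed

lemma P_nonneg:
  assumes "s \<in> shapes_even n p"
  shows "(\<Prod>i\<in>{1..L}. mom i ^ n_visits i s) \<ge> 0"
proof (rule prod_nonneg)
  fix i assume "i \<in> {1..L}"
  show "mom i ^ n_visits i s \<ge> 0"
  proof (cases "even i")
    case True then show ?thesis using mom_even_nonneg by simp
  next
    case False
    have "{e \<in> cyc_edges s. edge_visits s e = i} = {}"
      using shape_even[OF assms] False by (auto simp: even_cycle_def)
    then have "n_visits i s = 0" unfolding n_visits_def by (metis card.empty)
    then show ?thesis by simp
  qed
qed

theorem lemma2p5:
  fixes n p :: nat and b :: "nat \<Rightarrow> nat \<Rightarrow> real" and \<sigma> :: real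
  assumes "n \<ge> 1" and "p > 0"
    and sym: "\<And>i j. i \<in> {1..n} \<Longrightarrow> j \<in> {1..n} \<Longrightarrow> b i j = b j i"
    and bnd: "Max {\<bar>b i j\<bar> | i j. i \<in> {1..n} \<and> j \<in> {1..n}} \<le> 1"
    and sigma_def: "\<sigma> = Max ((\<lambda>i. sqrt (\<Sum>j\<in>{1..n}. (b i j)\<^sup>2)) ` {1..n})"
  shows "(\<forall>v \<in> {1..n}. \<forall>s \<in> shapes_even n p.
            (\<Sum>u\<in>Gamma n p s v. cycle_weight b u) \<le> \<sigma> ^ (2 * (m_shape s - 1)))
       \<and> (\<integral>g. mat_trace n (mat_pow n (gauss_mat b g) (2 * p))
               \<partial>(\<Pi>\<^sub>M ij\<in>lower_idx n. std_normal_distribution))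
         \<le> real n * (\<Sum>s\<in>shapes_even n p. \<sigma> ^ (2 * (m_shape s - 1)) *
               (\<Prod>i\<in>{1..2 * p}. (\<integral>x. x ^ i \<partial>std_normal_distribution) ^ n_visits i s))"
proof -
  have setB: "{\<bar>b i j\<bar> | i j. i \<in> {1..n} \<and> j \<in> {1..n}} = (\<lambda>(i,j). \<bar>b i j\<bar>) ` ({1..n} \<times> {1..n})"
    by force
  have babs: "\<bar>b i j\<bar> \<le> 1" if "i \<in> {1..n}" "j \<in> {1..n}" for i j
  proof -
    have "\<bar>b i j\<bar> \<le> Max {\<bar>b i j\<bar> | i j. i \<in> {1..n} \<and> j \<in> {1..n}}"
      unfolding setB by (rule Max_ge) (use that in auto)
    then show ?thesis using bnd by simp
  qed
  have rowle: "sqrt (\<Sum>j\<in>{1..n}. (b y j)\<^sup>2) \<le> \<sigma>" if "y \<in> {1..n}" for y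
    unfolding sigma_def by (rule Max_ge) (use that in auto)
  have sig0: "\<sigma> \<ge> 0"
  proof -
    have "1 \<in> {1..n}" using assms(1) by simp
    have "0 \<le> sqrt (\<Sum>j\<in>{1..n}. (b 1 j)\<^sup>2)" by (simp add: sum_nonneg)
    then show ?thesis using rowle[OF \<open>1 \<in> {1..n}\<close>] by linarith
  qed
  have row: "(\<Sum>x\<in>{1..n}. (b y x)^2) \<le> \<sigma>^2" if "y \<in> {1..n}" for y
  proof -
    have "sqrt (\<Sum>x\<in>{1..n}. (b y x)^2) ^ 2 \<le> \<sigma>^2"
      using rowle[OF that] by (intro power_mono) (auto intro!: sum_nonneg)
    then show ?thesis by (simp add: sum_nonneg)
  qed
  have part1: "\<forall>v \<in> {1..n}. \<forall>s \<in> shapes_even n p.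
            (\<Sum>u\<in>Gamma n p s v. cycle_weight b u) \<le> \<sigma> ^ (2 * (m_shape s - 1))"
  proof (intro ballI)
    fix v s assume vs: "v \<in> {1..n}" "s \<in> shapes_even n p"
    show "(\<Sum>u\<in>Gamma n p s v. cycle_weight b u) \<le> \<sigma> ^ (2 * (m_shape s - 1))"
    proof (rule part1[where n=n and b=b and v=v and s=s and p=p and \<sigma>=\<sigma>])
      show "\<And>i j. i \<in> {1..n} \<Longrightarrow> j \<in> {1..n} \<Longrightarrow> b i j = b j i" by (rule sym)
      show "\<And>i j. i \<in> {1..n} \<Longrightarrow> j \<in> {1..n} \<Longrightarrow> \<bar>b i j\<bar> \<le> 1" by (rule babs)
      show "\<And>y. y \<in> {1..n} \<Longrightarrow> (\<Sum>x\<in>{1..n}. (b y x)^2) \<le> \<sigma>^2" by (rule row)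
    qed (simp_all only: vs sig0 \<open>p > 0\<close>)
  qed
  let ?M = "\<Pi>\<^sub>M ij\<in>lower_idx n. std_normal_distribution"
  let ?C = "cycles n p"
  let ?S = "shapes_even n p"
  let ?E = "{u \<in> ?C. even_cycle u}"
  define P where "P s = (\<Prod>i\<in>{1..2*p}. mom i ^ n_visits i s)" for s
  have Ceq: "?C = {u. set u \<subseteq> {1..n} \<and> length u = 2*p}" by (auto simp: cycles_def)
  have finC: "finite ?C" unfolding Ceq by (simp add: finite_lists_length_eq)
  have finS: "finite ?S" unfolding shapes_even_def using finC by simp
  have Cu: "set u \<subseteq> {1..n}" "length u = 2*p" "length u > 0" if "u \<in> ?C" for u
    using that \<open>p > 0\<close> by (auto simp: cycles_def)
  have "(\<integral>g. mat_trace n (mat_pow n (gauss_mat b g) (2 * p)) \<partial>?M)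
      = (\<integral>g. (\<Sum>u\<in>?C. cycle_weight (gauss_mat b g) u) \<partial>?M)"
    using trace_expand[of "2*p" n] \<open>p > 0\<close> Ceq by simp
  also have "\<dots> = (\<Sum>u\<in>?C. \<integral>g. cycle_weight (gauss_mat b g) u \<partial>?M)"
  proof -
    have "\<And>u. u \<in> ?C \<Longrightarrow> integrable ?M (\<lambda>g. cycle_weight (gauss_mat b g) u)"
      using E_cycle(1)[where n=n and b=b, OF sym] Cu by blast
    then show ?thesis using Bochner_Integration.integral_sum[where I="?C" and M="?M" and f="\<lambda>u g. cycle_weight (gauss_mat b g) u"] by simp
  qed
  also have "\<dots> = (\<Sum>u\<in>?C. cycle_weight b u * P u)"
  proof (rule sum.cong[OF refl])
    fix u assume u: "u \<in> ?C"
    show "(\<integral>g. cycle_weight (gauss_mat b g) u \<partial>?M) = cycle_weight b u * P u"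
      using E_cycle(2)[where n=n and b=b, OF sym Cu(1,3)[OF u]] mom_prod[OF Cu(1,2)[OF u]] \<open>p > 0\<close>
      by (simp add: P_def)
  qed
  also have "\<dots> = (\<Sum>u\<in>?E. cycle_weight b u * P u)"
  proof (rule sum.mono_neutral_right[OF finC])
    show "?E \<subseteq> ?C" by blast
    show "\<forall>u\<in>?C - ?E. cycle_weight b u * P u = 0"
    proof
      fix u assume "u \<in> ?C - ?E"
      then have uC: "u \<in> ?C" and ne: "\<not> even_cycle u" by auto
      have "P u = 0" unfolding P_def by (rule odd_vanish[OF Cu(2)[OF uC] _ ne]) (use \<open>p > 0\<close> in simp)
      then show "cycle_weight b u * P u = 0" by simp
    qed
  qed
  also have "\<dots> = (\<Sum>u\<in>?E. cycle_weight b u * P (shape u))"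
    by (rule sum.cong[OF refl]) (simp only: P_def nvisits_pat[OF samepat_shape, symmetric])
  also have "\<dots> = (\<Sum>q\<in>?S \<times> {1..n}. \<Sum>u\<in>{u. u \<in> ?E \<and> (shape u, u!0) = q}. cycle_weight b u * P (shape u))"
  proof (rule sum.group[symmetric])
    show "finite ?E" using finC by simp
    show "finite (?S \<times> {1..n})" using finS by simp
    show "(\<lambda>u. (shape u, u!0)) ` ?E \<subseteq> ?S \<times> {1..n}"
    proof
      fix q assume "q \<in> (\<lambda>u. (shape u, u!0)) ` ?E"
      then obtain u where u: "u \<in> ?E" "q = (shape u, u!0)" by blast
      have uC: "u \<in> ?C" using u by simp
      have "u!0 \<in> set u" using Cu(3)[OF uC] by simp
      then have "u!0 \<in> {1..n}" using Cu(1)[OF uC] by blast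
      moreover have "shape u \<in> ?S" using u by (auto simp: shapes_even_def)
      ultimately show "q \<in> ?S \<times> {1..n}" using u by simp
    qed
  qed
  also have "\<dots> = (\<Sum>q\<in>?S \<times> {1..n}. P (fst q) * (\<Sum>u\<in>Gamma n p (fst q) (snd q). cycle_weight b u))"
  proof (rule sum.cong[OF refl])
    fix q assume q: "q \<in> ?S \<times> {1..n}"
    have "{u. u \<in> ?E \<and> (shape u, u!0) = q} = Gamma n p (fst q) (snd q)"
      using q Gamma_even[of "fst q" n p] by (auto simp: Gamma_def)
    moreover have "(\<Sum>u\<in>Gamma n p (fst q) (snd q). cycle_weight b u * P (shape u))
        = (\<Sum>u\<in>Gamma n p (fst q) (snd q). P (fst q) * cycle_weight b u)"
      by (rule sum.cong[OF refl]) (simp add: Gamma_def)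
    ultimately show "(\<Sum>u\<in>{u. u \<in> ?E \<and> (shape u, u!0) = q}. cycle_weight b u * P (shape u))
        = P (fst q) * (\<Sum>u\<in>Gamma n p (fst q) (snd q). cycle_weight b u)"
      by (simp add: sum_distrib_left)
  qed
  also have "\<dots> \<le> (\<Sum>q\<in>?S \<times> {1..n}. P (fst q) * \<sigma> ^ (2 * (m_shape (fst q) - 1)))"
  proof (rule sum_mono)
    fix q assume q: "q \<in> ?S \<times> {1..n}"
    show "P (fst q) * (\<Sum>u\<in>Gamma n p (fst q) (snd q). cycle_weight b u) \<le> P (fst q) * \<sigma> ^ (2 * (m_shape (fst q) - 1))"
      using part1 q P_nonneg[of "fst q" n p "2*p"] by (intro mult_left_mono) (auto simp: P_def)
  qed
  also have "\<dots> = real n * (\<Sum>s\<in>?S. \<sigma> ^ (2 * (m_shape s - 1)) * P s)"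
  proof -
    have "(\<Sum>q\<in>?S \<times> {1..n}. P (fst q) * \<sigma> ^ (2 * (m_shape (fst q) - 1)))
        = (\<Sum>s\<in>?S. \<Sum>v\<in>{1..n}. P s * \<sigma> ^ (2 * (m_shape s - 1)))"
      by (subst sum.cartesian_product) (simp add: case_prod_beta)
    also have "\<dots> = (\<Sum>s\<in>?S. real n * (\<sigma> ^ (2 * (m_shape s - 1)) * P s))"
      by (rule sum.cong[OF refl]) simp
    also have "\<dots> = real n * (\<Sum>s\<in>?S. \<sigma> ^ (2 * (m_shape s - 1)) * P s)"
      by (rule sum_distrib_left[symmetric])
    finally show ?thesis .
  qed
  finally show ?thesis using part1 by (simp add: P_def)
qed

end
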